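(* In the 1-sided False Negative regime, let $\mathcal{S}=\{E_1,\dots,E_k\}$ be a collection of $k$ sets of edges, each with a fixed cyclic order, and assume at least one set in $\mathcal{S}$ contains some realized edge. Consider the procedure DISCOVER$(\mathcal{S})$: repeat rounds; in each round, for $i=1,\dots,k$, query the next edge $e$ in the cyclic order of $E_i$, and if the answer is ``Yes'' return $e$. Then DISCOVER finds and returns a realized edge using at most $2k|E_f|$ queries in expectation, where $E_f$ is the set containing the found edge.
   Context: Noisy query model: each edge is either realized or not (fixed arbitrarily in advance). An oracle answers queries ``Is edge $e$ realized?'' with ``Yes''/``No''; each query costs $1$; answers to distinct queries (including repeated queries of the same edge) are independent. In the 1-sided False Negative regime: for a non-realized edge the answer is always ``No''; for a realized edge the answer is ``No'' with a constant probability $p<1/2$ and ``Yes'' with probability $1-p$. *)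

theory Defs
  imports "HOL-Probability.Probability"
begin

text \<open>A collection S = {E_1,...,E_k} of edge sets, each with a fixed cyclic order, is a
list Es of k lists (E_i is Es ! i, 0-based). The queries of DISCOVER are numbered
t = 0,1,2,...: query t is made in round t div k, to set number t mod k, and asks the
(t div k)-th edge (cyclically) of that set.\<close>

definition query_set :: "'e list list \<Rightarrow> nat \<Rightarrow> nat" where
  "query_set Es t = t mod length Es"

definition query_edge :: "'e list list \<Rightarrow> nat \<Rightarrow> 'e" where
  "query_edge Es t =
     (let E = Es ! query_set Es t in E ! ((t div length Es) mod length E))"

text \<open>Oracle in the 1-sided false negative regime: the answer to the t-th query
(True = Yes) is independent of all other answers; for a realized edge it is Yes with
probability 1 - p, for a non-realized edge it is always No. R is the set of realized edges.\<close>

definition oracle_space :: "('e \<Rightarrow> bool) \<Rightarrow> real \<Rightarrow> 'e list list \<Rightarrow> (nat \<Rightarrow> bool) measure" where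
  "oracle_space R p Es =
     (\<Pi>\<^sub>M t\<in>UNIV. measure_pmf (bernoulli_pmf (if R (query_edge Es t) then 1 - p else 0)))"

definition discover_stop :: "(nat \<Rightarrow> bool) \<Rightarrow> nat" where
  "discover_stop \<omega> = (LEAST t. \<omega> t)"

definition discover_queries :: "(nat \<Rightarrow> bool) \<Rightarrow> ennreal" where
  "discover_queries \<omega> = (if \<exists>t. \<omega> t then of_nat (Suc (discover_stop \<omega>)) else \<infinity>)"

definition discover_edge :: "'e list list \<Rightarrow> (nat \<Rightarrow> bool) \<Rightarrow> 'e" where
  "discover_edge Es \<omega> = query_edge Es (discover_stop \<omega>)"

definition found_set_size :: "'e list list \<Rightarrow> (nat \<Rightarrow> bool) \<Rightarrow> nat" where
  "found_set_size Es \<omega> = length (Es ! query_set Es (discover_stop \<omega>))"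

end

theory Submission
  imports Defs
begin

lemma oracle_prob: "prob_space (oracle_space R p Es)"
  unfolding oracle_space_def by (intro prob_space_PiM prob_space_measure_pmf)

lemma space_oracle: "space (oracle_space R p Es) = UNIV"
  unfolding oracle_space_def by (simp add: space_PiM)

lemma sets_oracle: "sets (oracle_space R p Es) = sets (\<Pi>\<^sub>M t\<in>UNIV. count_space (UNIV::bool set))"
  unfolding oracle_space_def by (intro sets_PiM_cong) auto

lemma cyl_eq:
  fixes M :: "nat \<Rightarrow> bool measure"
  assumes "\<And>i. space (M i) = UNIV"
  shows "{\<omega>::nat\<Rightarrow>bool. \<forall>i\<in>J. \<omega> i \<in> X i} = prod_emb UNIV M J (Pi\<^sub>E J X)"
  using assms by (auto simp: prod_emb_def space_PiM PiE_iff)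

lemma cyl_emeasure:
  assumes "finite J"
  shows "{\<omega>. \<forall>i\<in>J. \<omega> i \<in> X i} \<in> sets (oracle_space R p Es)"
   and "emeasure (oracle_space R p Es) {\<omega>. \<forall>i\<in>J. \<omega> i \<in> X i}
      = (\<Prod>i\<in>J. emeasure (measure_pmf (bernoulli_pmf (if R (query_edge Es i) then 1 - p else 0))) (X i))"
proof -
  let ?M = "\<lambda>t. measure_pmf (bernoulli_pmf (if R (query_edge Es t) then 1 - p else 0))"
  have e: "{\<omega>. \<forall>i\<in>J. \<omega> i \<in> X i} = prod_emb UNIV ?M J (Pi\<^sub>E J X)"
    by (rule cyl_eq) simp
  show "{\<omega>. \<forall>i\<in>J. \<omega> i \<in> X i} \<in> sets (oracle_space R p Es)"
    unfolding e oracle_space_def using assms by (intro sets_PiM_I) auto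
  show "emeasure (oracle_space R p Es) {\<omega>. \<forall>i\<in>J. \<omega> i \<in> X i}
      = (\<Prod>i\<in>J. emeasure (?M i) (X i))"
    unfolding e oracle_space_def using assms
    by (intro emeasure_PiM_emb prob_space_measure_pmf) auto
qed

theorem lemma6:
  fixes Es :: "'e list list" and R :: "'e \<Rightarrow> bool" and p :: real
  assumes "0 \<le> p" and "p < 1/2"
    and "\<forall>E\<in>set Es. E \<noteq> [] \<and> distinct E"
    and "\<exists>E\<in>set Es. \<exists>e\<in>set E. R e"
  shows "(AE \<omega> in oracle_space R p Es. (\<exists>t. \<omega> t) \<and> R (discover_edge Es \<omega>))
     \<and> (\<integral>\<^sup>+\<omega>. discover_queries \<omega> \<partial>oracle_space R p Es)
         \<le> 2 * of_nat (length Es) * (\<integral>\<^sup>+\<omega>. of_nat (found_set_size Es \<omega>) \<partial>oracle_space R p Es)"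
proof -
  let ?O = "oracle_space R p Es"
  interpret O: prob_space ?O by (rule oracle_prob)
  define k where "k = length Es"
  have ne: "\<And>i. i < k \<Longrightarrow> Es ! i \<noteq> []" using assms(3) unfolding k_def by auto
  define P where "P m \<longleftrightarrow> (\<exists>i<k. m = length (Es ! i) \<and> (\<exists>e\<in>set (Es ! i). R e))" for m
  have "\<exists>m. P m" using assms(4) unfolding P_def k_def by (metis in_set_conv_nth)
  define m where "m = (LEAST m. P m)"
  have Pm: "P m" unfolding m_def using \<open>\<exists>m. P m\<close> by (metis LeastI)
  have minm: "\<And>i e. i < k \<Longrightarrow> e \<in> set (Es ! i) \<Longrightarrow> R e \<Longrightarrow> m \<le> length (Es ! i)"
    unfolding m_def by (rule Least_le) (auto simp: P_def)
  obtain i0 e0 where i0: "i0 < k" "m = length (Es ! i0)" "e0 \<in> set (Es ! i0)" "R e0"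
    using Pm unfolding P_def by blast
  obtain j0 where j0: "j0 < m" "Es ! i0 ! j0 = e0" using i0 by (metis in_set_conv_nth)
  have kpos: "k > 0" using i0 by simp
  have mpos: "m > 0" using j0 by simp
  define tt where "tt n = (j0 + m * n) * k + i0" for n
  have qtt: "query_edge Es (tt n) = e0" for n
  proof -
    have "tt n mod k = i0" unfolding tt_def using i0 by simp
    moreover have "tt n div k = j0 + m * n" unfolding tt_def using i0 by simp
    moreover have "(j0 + m * n) mod m = j0" using j0 by simp
    ultimately show ?thesis unfolding query_edge_def query_set_def k_def[symmetric]
      using i0 j0 by (simp add: Let_def)
  qed
  have inj: "inj tt" 
    unfolding tt_def inj_def using kpos mpos by auto
  define A where "A n = {\<omega>. \<forall>i\<in>tt ` {..<n}. \<omega> i \<in> {False}}" for n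
  have Asets: "A n \<in> sets ?O" for n unfolding A_def by (rule cyl_emeasure) simp
  have Ameas: "emeasure ?O (A n) = ennreal (p ^ n)" for n
  proof -
    have "emeasure ?O (A n) = (\<Prod>i\<in>tt ` {..<n}. emeasure
          (measure_pmf (bernoulli_pmf (if R (query_edge Es i) then 1 - p else 0))) {False})"
      unfolding A_def by (rule cyl_emeasure) simp
    also have "\<dots> = (\<Prod>n\<in>{..<n}. ennreal p)"
      using inj assms(1,2) i0(4)
      by (subst prod.reindex) (auto simp: inj_on_def qtt emeasure_pmf_single intro!: prod.cong)
    also have "\<dots> = ennreal (p ^ n)" using assms(1) by (simp add: prod_ennreal ennreal_power)
    finally show ?thesis .
  qed
  define f where "f \<omega> = (\<Sum>n. indicator (A n) \<omega> :: ennreal)" for \<omega>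
  have fmeas: "f \<in> borel_measurable ?O" unfolding f_def using Asets by measurable
  have fint: "(\<integral>\<^sup>+\<omega>. f \<omega> \<partial>?O) = ennreal (1 / (1 - p))"
  proof -
    have "(\<integral>\<^sup>+\<omega>. f \<omega> \<partial>?O) = (\<Sum>n. ennreal (p ^ n))"
      unfolding f_def using Asets by (subst nn_integral_suminf) (auto simp: Ameas)
    also have "\<dots> = ennreal (1 / (1 - p))"
      using assms(1,2) by (intro suminf_ennreal_eq geometric_sums) auto
    finally show ?thesis .
  qed

  have ftop: "f \<omega> = \<infinity>" if "\<not> (\<exists>n. \<omega> (tt n))" for \<omega>
  proof -
    have "f \<omega> = (\<Sum>n. ennreal 1)" unfolding f_def A_def using that
      by (intro suminf_cong) (auto simp: indicator_def)
    also have "\<dots> = top"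
      by (rule summable_iff_suminf_neq_top) (auto simp: summable_const_iff)
    finally show ?thesis by simp
  qed
  have fbound: "discover_queries \<omega> \<le> of_nat (k * m) * f \<omega>" for \<omega>
  proof (cases "\<exists>n. \<omega> (tt n)")
    case False
    have "of_nat (k * m) \<noteq> (0::ennreal)" using kpos mpos by simp
    then have "of_nat (k * m) * f \<omega> = \<infinity>" using ftop[OF False]
      by (simp add: ennreal_mult_top)
    then show ?thesis by simp
  next
    case True
    define G where "G = (LEAST n. \<omega> (tt n))"
    have wG: "\<omega> (tt G)" unfolding G_def using True by (metis LeastI)
    have ex: "\<exists>t. \<omega> t" using wG by blast
    have "discover_stop \<omega> \<le> tt G" unfolding discover_stop_def using wG by (rule Least_le)
    have "Suc (tt G) \<le> k * m * Suc G"
    proof -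
      have "Suc (tt G) \<le> (j0 + m * G) * k + k" unfolding tt_def using i0 by simp
      also have "\<dots> = (Suc j0 + m * G) * k" by simp
      also have "\<dots> \<le> (m + m * G) * k" using j0 by (intro mult_le_mono1) simp
      also have "\<dots> = k * m * Suc G" by (simp add: algebra_simps)
      finally show ?thesis .
    qed
    then have le: "Suc (discover_stop \<omega>) \<le> k * m * Suc G"
      using \<open>discover_stop \<omega> \<le> tt G\<close> by linarith
    have "discover_queries \<omega> = of_nat (Suc (discover_stop \<omega>))"
      using ex by (simp add: discover_queries_def)
    also have "\<dots> \<le> of_nat (k * m * Suc G)" using le by (rule of_nat_mono)
    also have "\<dots> = of_nat (k * m) * of_nat (Suc G)" by (simp only: of_nat_mult)
    also have "(of_nat (Suc G) :: ennreal) = (\<Sum>n<Suc G. indicator (A n) \<omega>)"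
    proof -
      have "\<omega> \<in> A n" if "n < Suc G" for n
        unfolding A_def using that by (auto simp: G_def) (metis less_Suc_eq_le not_less_Least order_less_le_trans)
      then show ?thesis by simp
    qed
    also have "(\<Sum>n<Suc G. indicator (A n) \<omega>) \<le> f \<omega>"
      unfolding f_def by (rule sum_le_suminf) auto
    finally show ?thesis by (simp add: mult_left_mono)
  qed
  have ae1: "AE \<omega> in ?O. f \<omega> \<noteq> \<infinity>"
    using fmeas fint by (intro nn_integral_PInf_AE) auto
  have ae2: "AE \<omega> in ?O. \<exists>n. \<omega> (tt n)"
    using ae1 by eventually_elim (use ftop in auto)
  have ae3: "AE \<omega> in ?O. \<forall>t. \<omega> t \<longrightarrow> R (query_edge Es t)"
  proof (subst AE_all_countable, intro allI)
    fix t
    show "AE \<omega> in ?O. \<omega> t \<longrightarrow> R (query_edge Es t)"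
    proof (cases "R (query_edge Es t)")
      case True then show ?thesis by simp
    next
      case False
      let ?N = "{\<omega>. \<forall>i\<in>{t}. \<omega> i \<in> {True}}"
      have "?N \<in> sets ?O" by (rule cyl_emeasure) simp
      moreover have "emeasure ?O ?N = 0"
        by (subst cyl_emeasure) (use False in \<open>auto simp: emeasure_pmf_single\<close>)
      ultimately have "?N \<in> null_sets ?O" by (intro null_setsI)
      then show ?thesis by (rule AE_I') auto
    qed
  qed
  have ae: "AE \<omega> in ?O. (\<exists>t. \<omega> t) \<and> R (discover_edge Es \<omega>)"
    using ae2 ae3
  proof eventually_elim
    case (elim \<omega>)
    then have ex: "\<exists>t. \<omega> t" by blast
    then have "\<omega> (discover_stop \<omega>)" unfolding discover_stop_def by (rule LeastI_ex)
    with elim ex show ?case unfolding discover_edge_def by blast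
  qed
  have ae4: "AE \<omega> in ?O. m \<le> found_set_size Es \<omega>"
    using ae
  proof eventually_elim
    case (elim \<omega>)
    let ?i = "discover_stop \<omega> mod k"
    have ik: "?i < k" using kpos by simp
    have "discover_edge Es \<omega> \<in> set (Es ! ?i)"
      unfolding discover_edge_def query_edge_def query_set_def k_def[symmetric]
      using ne[OF ik] by (simp add: Let_def)
    then have "m \<le> length (Es ! ?i)" using minm ik elim by blast
    then show ?case unfolding found_set_size_def query_set_def k_def .
  qed
  have "(\<integral>\<^sup>+\<omega>. discover_queries \<omega> \<partial>?O) \<le> (\<integral>\<^sup>+\<omega>. of_nat (k * m) * f \<omega> \<partial>?O)"
    by (intro nn_integral_mono fbound)
  also have "\<dots> = of_nat (k * m) * ennreal (1 / (1 - p))"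
    using fmeas fint by (simp add: nn_integral_cmult)
  also have "\<dots> \<le> of_nat (k * m) * 2"
  proof (intro mult_left_mono)
    have "1 / (1 - p) \<le> 2" using assms(1,2) by (simp add: field_simps)
    then show "ennreal (1 / (1 - p)) \<le> 2"
      by (metis ennreal_leI ennreal_numeral)
  qed simp
  also have "\<dots> = 2 * of_nat k * (\<integral>\<^sup>+\<omega>. of_nat m \<partial>?O)"
    by (simp add: O.emeasure_space_1 mult_ac)
  also have "\<dots> \<le> 2 * of_nat k * (\<integral>\<^sup>+\<omega>. of_nat (found_set_size Es \<omega>) \<partial>?O)"
    by (intro mult_left_mono nn_integral_mono_AE) (use ae4 in auto)
  finally show ?thesis using ae unfolding k_def by blast
qed

end
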